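(* There is a family of MaxSAT instances $F_n$ encoded with blocking variables, with $O(n)$ variables, $O(n)$ clauses and $\mathrm{cost}(F_n)=\Omega(n)$, such that every derivation in the cost-SR calculus from $F_n$ that proves $\mathrm{cost}(F_n)\ge 1$ (i.e. contains a unit clause $b$ for some blocking variable $b$) contains a clause $C$ introduced by the cost-SR rule whose witnessing substitution $\sigma$ has $\mathrm{flip}(C,\sigma)=\Omega(n)$.
   Context: Literals, clauses, CNFs (multisets of clauses), $\mathrm{Var}(\Gamma)$. A substitution $\sigma$ maps variables to $0$, $1$ or literals, extended by $\sigma(\lnot x)=\lnot\sigma(x)$, $\sigma(0)=0$, $\sigma(1)=1$; $(\sigma\circ\tau)(x)=\sigma(\tau(x))$. A (partial) assignment has $\sigma(x)\in\{0,1,x\}$; total means all variables assigned. $C{\upharpoonright}_\sigma$: apply $\sigma$ to literals and simplify; $\Gamma{\upharpoonright}_\sigma$ is the multiset of $C{\upharpoonright}_\sigma\ne1$, $C\in\Gamma$. $\lnot C$ is the partial assignment falsifying all literals of $C$; $\tau\supseteq\rho$ means extension. $\Gamma\vdash_1 C$ means unit propagation on $\Gamma{\upharpoonright}_{\lnot C}$ derives the empty clause; $\Gamma\vdash_1\Delta$ means this for all $D\in\Delta$. A MaxSAT instance encoded with blocking variables is a CNF $\Gamma=H\cup\{C_1\lor b_1,\dots,C_m\lor b_m\}$ with distinct fresh blocking variables $b_i$; $\mathrm{cost}(\alpha)=\sum_i\alpha(b_i)$; $\mathrm{cost}(\Gamma)=\min\{\mathrm{cost}(\alpha):\alpha\models\Gamma\}$.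 $C$ is cost-SR w.r.t. $\Gamma$ via $\sigma$ if (1) $\Gamma{\upharpoonright}_{\lnot C}\vdash_1(\Gamma\cup\{C\}){\upharpoonright}_\sigma$ and (2) $\mathrm{cost}(\tau\circ\sigma)\le\mathrm{cost}(\tau)$ for all total $\tau\supseteq\lnot C$. A cost-SR calculus derivation from $\Gamma$: sequence $D_1,\dots,D_t$, each in $\Gamma$, or by weakening/resolution from earlier clauses, or cost-SR w.r.t. $\Gamma\cup\{D_1,\dots,D_{i-1}\}$ with $\mathrm{Var}(D_i)\subseteq\mathrm{Var}(\Gamma)$ (witness attached). $\mathrm{flip}(C,\sigma)=\max_{\tau\supseteq\lnot C}\mathrm{HD}(\tau,\tau\circ\sigma)$ over total $\tau$, with $\mathrm{HD}$ the Hamming distance. *)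

theory Defs
  imports Complex_Main "HOL-Library.Multiset"
begin

datatype lit = Pos nat | Neg nat

fun var_of :: "lit \<Rightarrow> nat" where
  "var_of (Pos x) = x" | "var_of (Neg x) = x"

fun negl :: "lit \<Rightarrow> lit" where
  "negl (Pos x) = Neg x" | "negl (Neg x) = Pos x"

type_synonym clause = "lit set"
type_synonym cnf = "clause multiset"

definition vars_clause :: "clause \<Rightarrow> nat set" where
  "vars_clause C = var_of ` C"

definition vars_cnf :: "cnf \<Rightarrow> nat set" where
  "vars_cnf \<Gamma> = (\<Union>C \<in> set_mset \<Gamma>. vars_clause C)"

datatype sval = Const bool | L lit

type_synonym subst = "nat \<Rightarrow> sval"

fun neg_sval :: "sval \<Rightarrow> sval" where
  "neg_sval (Const b) = Const (\<not> b)" | "neg_sval (L l) = L (negl l)"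

fun app_lit :: "subst \<Rightarrow> lit \<Rightarrow> sval" where
  "app_lit \<sigma> (Pos x) = \<sigma> x" | "app_lit \<sigma> (Neg x) = neg_sval (\<sigma> x)"

text \<open>Restriction of a clause: None if it becomes 1 (satisfied), otherwise the
  simplified clause (literals mapped to 0 are removed).\<close>
definition restrict_clause :: "subst \<Rightarrow> clause \<Rightarrow> clause option" where
  "restrict_clause \<sigma> C =
     (if \<exists>l\<in>C. app_lit \<sigma> l = Const True then None
      else Some {l'. \<exists>l\<in>C. app_lit \<sigma> l = L l'})"

definition restrict_cnf :: "subst \<Rightarrow> cnf \<Rightarrow> cnf" where
  "restrict_cnf \<sigma> \<Gamma> =
     image_mset (\<lambda>C. the (restrict_clause \<sigma> C))
       (filter_mset (\<lambda>C. restrict_clause \<sigma> C \<noteq> None) \<Gamma>)"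

text \<open>The partial assignment falsifying all literals of C (as a substitution
  that is the identity on unassigned variables).\<close>
definition neg_clause :: "clause \<Rightarrow> subst" where
  "neg_clause C x =
     (if Pos x \<in> C then Const False else if Neg x \<in> C then Const True else L (Pos x))"

fun lit_val :: "(nat \<Rightarrow> bool) \<Rightarrow> lit \<Rightarrow> bool" where
  "lit_val \<tau> (Pos x) = \<tau> x" | "lit_val \<tau> (Neg x) = (\<not> \<tau> x)"

fun eval_sval :: "(nat \<Rightarrow> bool) \<Rightarrow> sval \<Rightarrow> bool" where
  "eval_sval \<tau> (Const b) = b" | "eval_sval \<tau> (L l) = lit_val \<tau> l"

definition comp_asg :: "(nat \<Rightarrow> bool) \<Rightarrow> subst \<Rightarrow> (nat \<Rightarrow> bool)" where
  "comp_asg \<tau> \<sigma> x = eval_sval \<tau> (\<sigma> x)"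

definition extends_neg :: "(nat \<Rightarrow> bool) \<Rightarrow> clause \<Rightarrow> bool" where
  "extends_neg \<tau> C \<longleftrightarrow> (\<forall>l\<in>C. \<not> lit_val \<tau> l)"

definition models :: "(nat \<Rightarrow> bool) \<Rightarrow> cnf \<Rightarrow> bool" where
  "models \<alpha> \<Gamma> \<longleftrightarrow> (\<forall>C \<in># \<Gamma>. \<exists>l\<in>C. lit_val \<alpha> l)"

definition subst_over :: "nat set \<Rightarrow> subst \<Rightarrow> bool" where
  "subst_over V \<sigma> \<longleftrightarrow>
     (\<forall>x\<in>V. (\<exists>b. \<sigma> x = Const b) \<or> (\<exists>l. \<sigma> x = L l \<and> var_of l \<in> V)) \<and>
     (\<forall>x. x \<notin> V \<longrightarrow> \<sigma> x = L (Pos x))"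

inductive_set up_true :: "cnf \<Rightarrow> lit set" for \<Gamma> :: cnf where
  unit: "C \<in># \<Gamma> \<Longrightarrow> l \<in> C \<Longrightarrow> (\<forall>l'\<in>C. l' \<noteq> l \<longrightarrow> negl l' \<in> up_true \<Gamma>)
         \<Longrightarrow> l \<in> up_true \<Gamma>"

definition up_refutes :: "cnf \<Rightarrow> bool" where
  "up_refutes \<Gamma> \<longleftrightarrow> (\<exists>C \<in># \<Gamma>. \<forall>l\<in>C. negl l \<in> up_true \<Gamma>)"

definition up_implies :: "cnf \<Rightarrow> clause \<Rightarrow> bool" where
  "up_implies \<Gamma> C \<longleftrightarrow> up_refutes (restrict_cnf (neg_clause C) \<Gamma>)"

definition up_implies_all :: "cnf \<Rightarrow> cnf \<Rightarrow> bool" where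
  "up_implies_all \<Gamma> \<Delta> \<longleftrightarrow> (\<forall>D \<in># \<Delta>. up_implies \<Gamma> D)"

text \<open>An instance: hard clauses H and soft clauses given as pairs (C_i, b_i).\<close>
record maxsat =
  hard :: cnf
  soft :: "(clause \<times> nat) list"

definition cnf_of :: "maxsat \<Rightarrow> cnf" where
  "cnf_of F = hard F + mset (map (\<lambda>(C, b). insert (Pos b) C) (soft F))"

definition blocking :: "maxsat \<Rightarrow> nat set" where
  "blocking F = snd ` set (soft F)"

definition wf_maxsat :: "maxsat \<Rightarrow> bool" where
  "wf_maxsat F \<longleftrightarrow>
     (\<forall>C \<in># hard F. finite C) \<and> (\<forall>(C, b) \<in> set (soft F). finite C) \<and>
     distinct (map snd (soft F)) \<and>
     (\<forall>b \<in> blocking F. b \<notin> vars_cnf (hard F) \<and>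
        (\<forall>(C, b') \<in> set (soft F). b \<notin> vars_clause C))"

definition cost :: "maxsat \<Rightarrow> (nat \<Rightarrow> bool) \<Rightarrow> nat" where
  "cost F \<alpha> = card {b \<in> blocking F. \<alpha> b}"

text \<open>cost(Gamma) = min cost of a model (0 if there is none, Inf {} = 0 on nat).\<close>
definition maxsat_cost :: "maxsat \<Rightarrow> nat" where
  "maxsat_cost F = Inf (cost F ` {\<alpha>. models \<alpha> (cnf_of F)})"

definition cost_sr :: "maxsat \<Rightarrow> cnf \<Rightarrow> clause \<Rightarrow> subst \<Rightarrow> bool" where
  "cost_sr F \<Gamma> C \<sigma> \<longleftrightarrow>
     up_implies_all (restrict_cnf (neg_clause C) \<Gamma>) (restrict_cnf \<sigma> (\<Gamma> + {#C#})) \<and>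
     (\<forall>\<tau>. extends_neg \<tau> C \<longrightarrow> cost F (comp_asg \<tau> \<sigma>) \<le> cost F \<tau>)"

definition hamming :: "nat set \<Rightarrow> (nat \<Rightarrow> bool) \<Rightarrow> (nat \<Rightarrow> bool) \<Rightarrow> nat" where
  "hamming V \<tau> \<tau>' = card {x \<in> V. \<tau> x \<noteq> \<tau>' x}"

definition flip :: "nat set \<Rightarrow> clause \<Rightarrow> subst \<Rightarrow> nat" where
  "flip V C \<sigma> = Sup {hamming V \<tau> (comp_asg \<tau> \<sigma>) | \<tau>. extends_neg \<tau> C}"

datatype just = Ax | Weak nat | Res nat nat | SR subst

definition resolvent :: "clause \<Rightarrow> clause \<Rightarrow> clause \<Rightarrow> bool" where
  "resolvent A B D \<longleftrightarrow> (\<exists>l. l \<in> A \<and> negl l \<in> B \<and> D = (A - {l}) \<union> (B - {negl l}))"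

definition valid_step :: "maxsat \<Rightarrow> (clause \<times> just) list \<Rightarrow> nat \<Rightarrow> bool" where
  "valid_step F ds i \<longleftrightarrow>
    (let D = fst (ds ! i); prev = mset (map fst (take i ds)) in
     finite D \<and>
     (case snd (ds ! i) of
        Ax \<Rightarrow> D \<in># cnf_of F
      | Weak j \<Rightarrow> j < i \<and> fst (ds ! j) \<subseteq> D
      | Res j k \<Rightarrow> j < i \<and> k < i \<and> resolvent (fst (ds ! j)) (fst (ds ! k)) D
      | SR \<sigma> \<Rightarrow> vars_clause D \<subseteq> vars_cnf (cnf_of F) \<and>
                 subst_over (vars_cnf (cnf_of F)) \<sigma> \<and>
                 cost_sr F (cnf_of F + prev) D \<sigma>))"

definition derivation :: "maxsat \<Rightarrow> (clause \<times> just) list \<Rightarrow> bool" where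
  "derivation F ds \<longleftrightarrow> (\<forall>i < length ds. valid_step F ds i)"

end

theory Submission
  imports Defs
begin

lemma lit_val_negl[simp]: "lit_val A (negl l) = (\<not> lit_val A l)"
  by (cases l) auto

lemma eval_neg[simp]: "eval_sval A (neg_sval s) = (\<not> eval_sval A s)"
  by (cases s) auto

lemma app_comp: "eval_sval A (app_lit \<sigma> l) = lit_val (comp_asg A \<sigma>) l"
  by (cases l) (auto simp: comp_asg_def)

lemma restrict_clause_None:
  "restrict_clause \<sigma> C = None \<Longrightarrow> \<exists>l\<in>C. lit_val (comp_asg A \<sigma>) l"
  unfolding restrict_clause_def
  by (metis app_comp eval_sval.simps(1) option.distinct(1))

lemma restrict_clause_Some:
  assumes "restrict_clause \<sigma> C = Some D"
  shows "(\<exists>l\<in>D. lit_val A l) = (\<exists>l\<in>C. lit_val (comp_asg A \<sigma>) l)"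
proof -
  have nt: "\<forall>l\<in>C. app_lit \<sigma> l \<noteq> Const True" and D: "D = {l'. \<exists>l\<in>C. app_lit \<sigma> l = L l'}"
    using assms unfolding restrict_clause_def by (auto split: if_splits)
  show ?thesis
  proof
    assume "\<exists>l\<in>D. lit_val A l"
    then obtain l' l where "l \<in> C" "app_lit \<sigma> l = L l'" "lit_val A l'" using D by auto
    then show "\<exists>l\<in>C. lit_val (comp_asg A \<sigma>) l" by (metis app_comp eval_sval.simps(2))
  next
    assume "\<exists>l\<in>C. lit_val (comp_asg A \<sigma>) l"
    then obtain l where l: "l \<in> C" "eval_sval A (app_lit \<sigma> l)" by (auto simp: app_comp)
    show "\<exists>l\<in>D. lit_val A l"
    proof (cases "app_lit \<sigma> l")
      case (Const b) then show ?thesis using l nt by auto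
    next
      case (L l') then show ?thesis using l D by auto
    qed
  qed
qed

lemma restrict_models: "models A (restrict_cnf \<sigma> \<Gamma>) = models (comp_asg A \<sigma>) \<Gamma>"
proof
  assume h: "models A (restrict_cnf \<sigma> \<Gamma>)"
  show "models (comp_asg A \<sigma>) \<Gamma>"
    unfolding models_def
  proof
    fix C assume C: "C \<in># \<Gamma>"
    show "\<exists>l\<in>C. lit_val (comp_asg A \<sigma>) l"
    proof (cases "restrict_clause \<sigma> C")
      case None then show ?thesis by (rule restrict_clause_None)
    next
      case (Some D)
      then have "D \<in># restrict_cnf \<sigma> \<Gamma>" using C unfolding restrict_cnf_def by force
      then have "\<exists>l\<in>D. lit_val A l" using h unfolding models_def by auto
      then show ?thesis using restrict_clause_Some[OF Some] by auto
    qed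
  qed
next
  assume h: "models (comp_asg A \<sigma>) \<Gamma>"
  show "models A (restrict_cnf \<sigma> \<Gamma>)"
    unfolding models_def
  proof
    fix D assume "D \<in># restrict_cnf \<sigma> \<Gamma>"
    then obtain C where C: "C \<in># \<Gamma>" "restrict_clause \<sigma> C \<noteq> None" "D = the (restrict_clause \<sigma> C)"
      unfolding restrict_cnf_def by auto
    then have S: "restrict_clause \<sigma> C = Some D" by auto
    show "\<exists>l\<in>D. lit_val A l" using restrict_clause_Some[OF S] h C unfolding models_def by auto
  qed
qed

lemma neg_clause_id: "extends_neg A C \<Longrightarrow> comp_asg A (neg_clause C) = A"
proof (rule ext)
  fix x assume h: "extends_neg A C"
  show "comp_asg A (neg_clause C) x = A x"
  proof (cases "Pos x \<in> C")
    case True then show ?thesis using h by (force simp: comp_asg_def neg_clause_def extends_neg_def)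
  next
    case False then show ?thesis using h by (force simp: comp_asg_def neg_clause_def extends_neg_def)
  qed
qed

lemma up_sound: "l \<in> up_true \<Delta> \<Longrightarrow> models A \<Delta> \<Longrightarrow> lit_val A l"
proof (induction rule: up_true.induct)
  case (unit C l)
  then obtain l0 where "l0 \<in> C" "lit_val A l0" unfolding models_def by auto
  then show ?case using unit by (metis lit_val_negl)
qed

lemma up_refutes_unsat: "models A \<Delta> \<Longrightarrow> \<not> up_refutes \<Delta>"
  unfolding up_refutes_def
  by (metis lit_val_negl models_def up_sound)

lemma up_implies_sound: "models A \<Delta> \<Longrightarrow> up_implies \<Delta> D \<Longrightarrow> \<exists>l\<in>D. lit_val A l"
proof (rule ccontr)
  assume m: "models A \<Delta>" and u: "up_implies \<Delta> D" and n: "\<not> (\<exists>l\<in>D. lit_val A l)"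
  then have "extends_neg A D" unfolding extends_neg_def by auto
  then have "comp_asg A (neg_clause D) = A" by (rule neg_clause_id)
  then have "models A (restrict_cnf (neg_clause D) \<Delta>)" using m restrict_models by metis
  then show False using u up_refutes_unsat unfolding up_implies_def by blast
qed

lemma sr_sound:
  assumes "models A \<Gamma>" "extends_neg A C" "cost_sr F \<Gamma> C \<sigma>"
  shows "models (comp_asg A \<sigma>) (\<Gamma> + {#C#}) \<and> cost F (comp_asg A \<sigma>) \<le> cost F A"
proof -
  have "models A (restrict_cnf (neg_clause C) \<Gamma>)"
    using assms(1) neg_clause_id[OF assms(2)] restrict_models by metis
  then have "models A (restrict_cnf \<sigma> (\<Gamma> + {#C#}))"
    using assms(3) up_implies_sound unfolding cost_sr_def up_implies_all_def models_def by metis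
  then show ?thesis using assms restrict_models unfolding cost_sr_def by metis
qed


definition FF :: "nat \<Rightarrow> maxsat" where
  "FF n = \<lparr>hard = {#}, soft = map (\<lambda>i. ({Pos 0}, 2*i+1)) [0..<n] @ map (\<lambda>i. ({Neg 0}, 2*i+2)) [0..<n]\<rparr>"

lemma odd_img: "{b\<in>{1..2*n}. odd b} = (\<lambda>i. 2*i+1) ` {..<(n::nat)}"
proof (rule set_eqI, rule iffI)
  fix x assume "x \<in> {b\<in>{1..2*n}. odd b}"
  then have h: "1 \<le> x" "x \<le> 2*n" "odd x" by auto
  then have "x = 2*((x-1) div 2)+1" "(x-1) div 2 < n" by presburger+
  then show "x \<in> (\<lambda>i. 2*i+1) ` {..<n}" by blast
qed auto

lemma even_img: "{b\<in>{1..2*n}. even b} = (\<lambda>i. 2*i+2) ` {..<(n::nat)}"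
proof (rule set_eqI, rule iffI)
  fix x assume "x \<in> {b\<in>{1..2*n}. even b}"
  then have h: "1 \<le> x" "x \<le> 2*n" "even x" by auto
  then have "x = 2*((x-2) div 2)+2" "(x-2) div 2 < n" by presburger+
  then show "x \<in> (\<lambda>i. 2*i+2) ` {..<n}" by blast
qed auto

lemma card_odd: "card {b\<in>{1..2*n}. odd b} = n"
  unfolding odd_img by (subst card_image) (auto simp: inj_on_def)

lemma card_even: "card {b\<in>{1..2*n}. even b} = n"
  unfolding even_img by (subst card_image) (auto simp: inj_on_def)

lemma blocking_FF: "blocking (FF n) = {1..2*n}"
proof -
  have "blocking (FF n) = (\<lambda>i. 2*i+1) ` {..<n} \<union> (\<lambda>i. 2*i+2) ` {..<n}"
    unfolding blocking_def FF_def by (simp add: image_Un image_image lessThan_atLeast0)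
  also have "\<dots> = {b\<in>{1..2*n}. odd b} \<union> {b\<in>{1..2*n}. even b}" by (simp only: odd_img even_img)
  also have "\<dots> = {1..2*n}" by auto
  finally show ?thesis .
qed

lemma cnf_FF: "cnf_of (FF n) = mset (map (\<lambda>i. {Pos (2*i+1), Pos 0}) [0..<n] @ map (\<lambda>i. {Pos (2*i+2), Neg 0}) [0..<n])"
  unfolding cnf_of_def FF_def by (simp add: comp_def)

lemma vars_FF: "n \<ge> 1 \<Longrightarrow> vars_cnf (cnf_of (FF n)) = {..2*n}"
proof -
  assume n: "n \<ge> 1"
  have "vars_cnf (cnf_of (FF n)) = (\<Union>i<n. {2*i+1, 0}) \<union> (\<Union>i<n. {2*i+2, 0})"
    unfolding cnf_FF vars_cnf_def vars_clause_def by auto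
  also have "\<dots> = {0} \<union> (\<lambda>i. 2*i+1) ` {..<n} \<union> (\<lambda>i. 2*i+2) ` {..<n}" using n by (auto; presburger)
  also have "\<dots> = {0} \<union> {b\<in>{1..2*n}. odd b} \<union> {b\<in>{1..2*n}. even b}" by (simp only: odd_img even_img)
  also have "\<dots> = {..2*n}" by auto
  finally show ?thesis .
qed

lemma models_FF: "models \<alpha> (cnf_of (FF n)) = (\<forall>i<n. (\<alpha> (2*i+1) \<or> \<alpha> 0) \<and> (\<alpha> (2*i+2) \<or> \<not> \<alpha> 0))"
proof -
  have "models \<alpha> (cnf_of (FF n)) = ((\<forall>i<n. \<exists>l\<in>{Pos (2*i+1), Pos 0}. lit_val \<alpha> l) \<and> (\<forall>i<n. \<exists>l\<in>{Pos (2*i+2), Neg 0}. lit_val \<alpha> l))"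
    unfolding cnf_FF models_def by (simp only: mset_append set_mset_union set_mset_mset set_map ball_Un set_upt atLeast0LessThan ball_simps image_iff lessThan_iff) blast
  then show ?thesis by auto
qed

lemma cost_FF: "cost (FF n) \<alpha> = card {b\<in>{1..2*n}. \<alpha> b}"
  unfolding cost_def blocking_FF ..

lemma wf_FF: "wf_maxsat (FF n)"
  unfolding wf_maxsat_def blocking_FF
  by (auto simp: FF_def vars_clause_def vars_cnf_def distinct_map inj_on_def; presburger)

lemma cost_ge: "models \<alpha> (cnf_of (FF n)) \<Longrightarrow> cost (FF n) \<alpha> \<ge> n"
proof -
  assume m: "models \<alpha> (cnf_of (FF n))"
  show ?thesis
  proof (cases "\<alpha> 0")
    case True
    then have "{b\<in>{1..2*n}. even b} \<subseteq> {b\<in>{1..2*n}. \<alpha> b}" using m unfolding models_FF even_img by auto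
    then have "card {b\<in>{1..2*n}. even b} \<le> card {b\<in>{1..2*n}. \<alpha> b}" by (intro card_mono) simp_all
    then show ?thesis unfolding cost_FF using card_even[of n] by simp
  next
    case False
    then have "{b\<in>{1..2*n}. odd b} \<subseteq> {b\<in>{1..2*n}. \<alpha> b}" using m unfolding models_FF odd_img by auto
    then have "card {b\<in>{1..2*n}. odd b} \<le> card {b\<in>{1..2*n}. \<alpha> b}" by (intro card_mono) simp_all
    then show ?thesis unfolding cost_FF using card_odd[of n] by simp
  qed
qed

lemma opt_aux:
  assumes s: "{b\<in>{1..2*n}. P b} \<subseteq> {b\<in>{1..2*n}. \<alpha> b}" and cP: "card {b\<in>{1..2*n}. P b} = n"
    and c: "card {b\<in>{1..2*n}. \<alpha> b} \<le> n" and z: "\<alpha> 0 = P (0::nat)"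
  shows "\<forall>x\<le>2*n. \<alpha> x = P x"
proof -
  have fin: "finite {b\<in>{1..2*n}. \<alpha> b}" by simp
  have "card {b\<in>{1..2*n}. P b} \<le> card {b\<in>{1..2*n}. \<alpha> b}" using card_mono[OF fin s] .
  then have "card {b\<in>{1..2*n}. P b} = card {b\<in>{1..2*n}. \<alpha> b}" using c cP by linarith
  then have e: "{b\<in>{1..2*n}. P b} = {b\<in>{1..2*n}. \<alpha> b}" using card_subset_eq[OF fin s] by blast
  show ?thesis
  proof (intro allI impI)
    fix x :: nat assume x: "x \<le> 2*n"
    show "\<alpha> x = P x"
    proof (cases "x = 0")
      case True then show ?thesis using z by simp
    next
      case False
      then have "x \<in> {1..2*n}" using x by simp
      then have "(x \<in> {b\<in>{1..2*n}. P b}) = P x" "(x \<in> {b\<in>{1..2*n}. \<alpha> b}) = \<alpha> x" by simp_all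
      then show ?thesis using e by metis
    qed
  qed
qed

lemma opt_FF:
  assumes m: "models \<alpha> (cnf_of (FF n))" and c: "cost (FF n) \<alpha> \<le> n"
  shows "(\<forall>x\<le>2*n. \<alpha> x = odd x) \<or> (\<forall>x\<le>2*n. \<alpha> x = even x)"
proof -
  have c': "card {b\<in>{1..2*n}. \<alpha> b} \<le> n" using c unfolding cost_FF .
  show ?thesis
  proof (cases "\<alpha> 0")
    case True
    then have "{b\<in>{1..2*n}. even b} \<subseteq> {b\<in>{1..2*n}. \<alpha> b}" using m unfolding models_FF even_img by auto
    then have "\<forall>x\<le>2*n. \<alpha> x = even x" using opt_aux[OF _ card_even c'] True by simp
    then show ?thesis by blast
  next
    case False
    then have "{b\<in>{1..2*n}. odd b} \<subseteq> {b\<in>{1..2*n}. \<alpha> b}" using m unfolding models_FF odd_img by auto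
    then have "\<forall>x\<le>2*n. \<alpha> x = odd x" using opt_aux[OF _ card_odd c'] False by simp
    then show ?thesis by blast
  qed
qed


definition sat :: "(nat \<Rightarrow> bool) \<Rightarrow> clause \<Rightarrow> bool" where
  "sat A D \<longleftrightarrow> (\<exists>l\<in>D. lit_val A l)"

lemma sat_agree:
  assumes "vars_clause D \<subseteq> V" "\<forall>x\<in>V. A x = B x" "sat A D"
  shows "sat B D"
proof -
  obtain l where l: "l \<in> D" "lit_val A l" using assms(3) sat_def by auto
  then have "var_of l \<in> V" using assms(1) unfolding vars_clause_def by auto
  then have "lit_val B l" using l assms(2) by (cases l) auto
  then show ?thesis using l sat_def by auto
qed

lemma flip_ge:
  assumes "finite V" "extends_neg A D"
  shows "hamming V A (comp_asg A \<sigma>) \<le> flip V D \<sigma>"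
  unfolding flip_def
proof (rule cSup_upper)
  show "hamming V A (comp_asg A \<sigma>) \<in> {hamming V \<tau> (comp_asg \<tau> \<sigma>) |\<tau>. extends_neg \<tau> D}"
    using assms by blast
  show "bdd_above {hamming V \<tau> (comp_asg \<tau> \<sigma>) |\<tau>. extends_neg \<tau> D}"
    unfolding bdd_above_def hamming_def
    by (rule exI[of _ "card V"]) (auto intro: card_mono assms(1))
qed

lemma models_odd: "models odd (cnf_of (FF n))" unfolding models_FF by auto
lemma models_even: "models even (cnf_of (FF n))" unfolding models_FF by auto
lemma cost_odd: "cost (FF n) odd = n" unfolding cost_FF using card_odd by simp
lemma cost_even: "cost (FF n) even = n" unfolding cost_FF using card_even by simp

lemma sr_key:
  assumes n: "n \<ge> 1" and A: "A = odd \<or> A = even"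
    and mG: "models A (cnf_of (FF n) + P)"
    and sr: "cost_sr (FF n) (cnf_of (FF n) + P) D \<sigma>"
    and vD: "vars_clause D \<subseteq> vars_cnf (cnf_of (FF n))"
    and ns: "\<not> sat A D"
  shows "flip (vars_cnf (cnf_of (FF n))) D \<sigma> \<ge> n"
proof -
  let ?V = "vars_cnf (cnf_of (FF n))"
  have V: "?V = {..2*n}" using vars_FF n by simp
  have en: "extends_neg A D" using ns unfolding sat_def extends_neg_def by auto
  define A' where "A' = comp_asg A \<sigma>"
  have s: "models A' (cnf_of (FF n) + P + {#D#}) \<and> cost (FF n) A' \<le> cost (FF n) A"
    using sr_sound[OF mG en sr] A'_def by simp
  then have mA': "models A' (cnf_of (FF n))" and sA': "sat A' D"
    unfolding models_def sat_def by auto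
  have "cost (FF n) A = n" using A cost_odd cost_even by auto
  then have "cost (FF n) A' \<le> n" using s by simp
  then have o: "(\<forall>x\<le>2*n. A' x = odd x) \<or> (\<forall>x\<le>2*n. A' x = even x)" using opt_FF mA' by blast
  obtain B where B: "B = odd \<or> B = even" "\<forall>x\<le>2*n. A' x = B x" using o by blast
  have "B \<noteq> A"
  proof
    assume "B = A"
    then have "\<forall>x\<in>?V. A' x = A x" using B(2) V by simp
    then have "sat A D" using sat_agree[OF vD _ sA'] by blast
    then show False using ns by simp
  qed
  then have AB: "\<forall>x. A x \<noteq> B x" using A B(1) by (elim disjE) auto
  have diff: "\<forall>x\<in>?V. A x \<noteq> A' x" using AB B(2) V by simp
  have "{x\<in>?V. A x \<noteq> A' x} = ?V" using diff by blast
  then have h1: "hamming ?V A A' = card ?V" unfolding hamming_def by simp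
  have h2: "card ?V = 2*n+1" unfolding V by simp
  have "hamming ?V A A' \<ge> n" unfolding h1 h2 by simp
  moreover have "hamming ?V A A' \<le> flip ?V D \<sigma>" unfolding A'_def
  proof (rule flip_ge)
    show "finite ?V" using V by simp
  qed (rule en)
  ultimately show ?thesis by linarith
qed


lemma main_part:
  assumes n: "n \<ge> 1" and der: "derivation (FF n) ds"
    and hb: "\<exists>b \<in> blocking (FF n). {Pos b} \<in> fst ` set ds"
  shows "\<exists>i < length ds. \<exists>\<sigma>. snd (ds ! i) = SR \<sigma> \<and>
           real (flip (vars_cnf (cnf_of (FF n))) (fst (ds ! i)) \<sigma>) \<ge> 1 * real n"
proof (rule ccontr)
  assume H: "\<not> ?thesis"
  have claim: "\<forall>A. (A = odd \<or> A = even) \<longrightarrow> sat A (fst (ds ! i))" if "i < length ds" for i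
    using that
  proof (induction i rule: less_induct)
    case (less i)
    have vs: "valid_step (FF n) ds i" using der less.prems derivation_def by blast
    show ?case
    proof (intro allI impI)
      fix A :: "nat \<Rightarrow> bool" assume A: "A = odd \<or> A = even"
      have mF: "models A (cnf_of (FF n))" using A models_odd models_even by auto
      show "sat A (fst (ds ! i))"
      proof (cases "snd (ds ! i)")
        case Ax
        then have "fst (ds ! i) \<in># cnf_of (FF n)" using vs unfolding valid_step_def Let_def by simp
        then show ?thesis using mF unfolding models_def sat_def by blast
      next
        case (Weak j)
        then have "j < i" "fst (ds ! j) \<subseteq> fst (ds ! i)" using vs unfolding valid_step_def Let_def by simp_all
        moreover have "sat A (fst (ds ! j))" using less.IH[of j] \<open>j < i\<close> less.prems A by auto
        ultimately show ?thesis unfolding sat_def by blast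
      next
        case (Res j k)
        then have jk: "j < i" "k < i" "resolvent (fst (ds ! j)) (fst (ds ! k)) (fst (ds ! i))"
          using vs unfolding valid_step_def Let_def by simp_all
        have sj: "sat A (fst (ds ! j))" using less.IH[of j] jk less.prems A by auto
        have sk: "sat A (fst (ds ! k))" using less.IH[of k] jk less.prems A by auto
        obtain l where l: "l \<in> fst (ds ! j)" "negl l \<in> fst (ds ! k)"
          "fst (ds ! i) = (fst (ds ! j) - {l}) \<union> (fst (ds ! k) - {negl l})"
          using jk(3) unfolding resolvent_def by blast
        show ?thesis
        proof (cases "lit_val A l")
          case True
          then obtain l2 where "l2 \<in> fst (ds ! k)" "lit_val A l2" using sk sat_def by auto
          then have "l2 \<noteq> negl l" using True by auto
          then show ?thesis using l \<open>l2 \<in> fst (ds ! k)\<close> \<open>lit_val A l2\<close> sat_def by auto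
        next
          case False
          then obtain l2 where "l2 \<in> fst (ds ! j)" "lit_val A l2" using sj sat_def by auto
          then have "l2 \<noteq> l" using False by auto
          then show ?thesis using l \<open>l2 \<in> fst (ds ! j)\<close> \<open>lit_val A l2\<close> sat_def by auto
        qed
      next
        case (SR \<sigma>)
        let ?P = "mset (map fst (take i ds))"
        have st: "vars_clause (fst (ds ! i)) \<subseteq> vars_cnf (cnf_of (FF n))"
             "cost_sr (FF n) (cnf_of (FF n) + ?P) (fst (ds ! i)) \<sigma>"
          using vs SR unfolding valid_step_def Let_def by simp_all
        have mP: "models A (cnf_of (FF n) + ?P)"
          unfolding models_def
        proof
          fix C assume "C \<in># cnf_of (FF n) + ?P"
          then consider "C \<in># cnf_of (FF n)" | "C \<in> set (map fst (take i ds))" by auto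
          then show "\<exists>l\<in>C. lit_val A l"
          proof cases
            case 1 then show ?thesis using mF models_def by blast
          next
            case 2
            then obtain j where "j < i" "C = fst (ds ! j)"
              using less.prems by (auto simp: in_set_conv_nth)
            then show ?thesis using less.IH[of j] less.prems A sat_def by auto
          qed
        qed
        show ?thesis
        proof (rule ccontr)
          assume "\<not> sat A (fst (ds ! i))"
          then have "flip (vars_cnf (cnf_of (FF n))) (fst (ds ! i)) \<sigma> \<ge> n"
            using sr_key[OF n A mP st(2) st(1)] by blast
          then show False using H less.prems SR by auto
        qed
      qed
    qed
  qed
  obtain b where b: "b \<in> blocking (FF n)" "{Pos b} \<in> fst ` set ds" using hb by blast
  then obtain i where "i < length ds" "fst (ds ! i) = {Pos b}" by (auto simp: in_set_conv_nth)
  then have "sat odd {Pos b}" "sat even {Pos b}" using claim by metis+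
  then show False unfolding sat_def by simp
qed

theorem corollary5p3:
  shows "\<exists>F :: nat \<Rightarrow> maxsat.
     (\<forall>n. wf_maxsat (F n)) \<and>
     (\<exists>c::real. \<exists>N. \<forall>n\<ge>N. real (card (vars_cnf (cnf_of (F n)))) \<le> c * real n) \<and>
     (\<exists>c::real. \<exists>N. \<forall>n\<ge>N. real (size (cnf_of (F n))) \<le> c * real n) \<and>
     (\<exists>c::real. c > 0 \<and> (\<exists>N. \<forall>n\<ge>N. real (maxsat_cost (F n)) \<ge> c * real n)) \<and>
     (\<exists>c::real. c > 0 \<and> (\<exists>N. \<forall>n\<ge>N. \<forall>ds.
        derivation (F n) ds \<longrightarrow>
        (\<exists>b \<in> blocking (F n). {Pos b} \<in> fst ` set ds) \<longrightarrow>
        (\<exists>i < length ds. \<exists>\<sigma>. snd (ds ! i) = SR \<sigma> \<and>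
           real (flip (vars_cnf (cnf_of (F n))) (fst (ds ! i)) \<sigma>) \<ge> c * real n)))"
apply (intro exI[of _ FF] conjI)
  subgoal using wf_FF by blast
  subgoal
  proof (rule exI[of _ "3::real"], rule exI[of _ "1::nat"], intro allI impI)
    fix n :: nat assume "n \<ge> 1"
    then show "real (card (vars_cnf (cnf_of (FF n)))) \<le> 3 * real n" using vars_FF by simp
  qed
  subgoal by (rule exI[of _ "2::real"], rule exI[of _ "0::nat"], intro allI impI) (simp add: cnf_FF)
  subgoal
  proof (rule exI[of _ "1::real"], rule conjI, simp, rule exI[of _ "0::nat"], intro allI impI)
    fix n :: nat
    have "n \<le> maxsat_cost (FF n)" unfolding maxsat_cost_def
      by (rule cInf_greatest) (use models_odd cost_ge in auto)
    then show "1 * real n \<le> real (maxsat_cost (FF n))" by simp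
  qed
  subgoal
  proof (rule exI[of _ "1::real"], rule conjI, simp, rule exI[of _ "1::nat"], intro allI impI)
    fix n ds assume "1 \<le> n" "derivation (FF n) ds" "\<exists>b \<in> blocking (FF n). {Pos b} \<in> fst ` set ds"
    then show "\<exists>i < length ds. \<exists>\<sigma>. snd (ds ! i) = SR \<sigma> \<and>
           real (flip (vars_cnf (cnf_of (FF n))) (fst (ds ! i)) \<sigma>) \<ge> 1 * real n" by (rule main_part)
  qed
  done

end
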